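(* Let $p\neq 2$ be a prime and $G=Z_{p^{\lambda_1}}\times\cdots\times Z_{p^{\lambda_n}}$ with $0<\lambda_1<\cdots<\lambda_n$. If $n\ge 3$ and $\lambda_n-\lambda_{n-1}=1$, then $J(G)$ has precisely two maximal down-set chains, namely $D_1(G)=\{J(i,1):i\in\{1,\dots,n\}\}$ and $$D_2'(G)=\{J(n-1,j):j\in\{1,\dots,\lambda_{n-1}-\lambda_{n-2}\}\}\cup\{J(n,j):j\in\{1,\dots,\lambda_{n-1}-\lambda_{n-2}+1\}\}.$$
   Context: Tuples are ordered componentwise; for $\mathbf 0\le\mathbf a\le(\lambda_1,\dots,\lambda_n)$, $T(\mathbf a)$ is the set of $(g_1,\dots,g_n)\in G$ with $|g_i|=p^{a_i}$, and $R(\mathbf a)=\bigcup_{\mathbf b\le\mathbf a}T(\mathbf b)$. For $i\in\{1,\dots,n\}$ and $j\in\{1,\dots,\lambda_i\}$, $J(i,j)=R(\mathbf a)$ where $a_k=j$ for $k\ge i$ and $a_k=\max\{0,\,j-(\lambda_i-\lambda_k)\}$ for $k<i$. $J(G)$ is the set of all $J(i,j)$, partially ordered by inclusion. A down set of a poset $P$ is a subset $X$ such that $x\le y\in X$ implies $x\in X$; a down-set chain is a subset that is both a chain and a down set; it is maximal if it is not contained in a strictly larger down-set chain. *)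

theory Defs
  imports Main "HOL-Computational_Algebra.Primes"
begin

text \<open>G = Z_{p^lam_1} x ... x Z_{p^lam_n}; elements are tuples indexed by 1..n,
  represented as functions nat => nat, with g i < p^(lam i) for i in {1..n} and
  g i = 0 outside {1..n}.\<close>

definition cyc_group :: "nat \<Rightarrow> nat \<Rightarrow> (nat \<Rightarrow> nat) \<Rightarrow> (nat \<Rightarrow> nat) set" where
  "cyc_group p n lam = {g. (\<forall>i\<in>{1..n}. g i < p ^ lam i) \<and> (\<forall>i. i \<notin> {1..n} \<longrightarrow> g i = 0)}"

definition add_ord :: "nat \<Rightarrow> nat \<Rightarrow> nat" where
  "add_ord m x = m div gcd x m"

definition T_set :: "nat \<Rightarrow> nat \<Rightarrow> (nat \<Rightarrow> nat) \<Rightarrow> (nat \<Rightarrow> nat) \<Rightarrow> (nat \<Rightarrow> nat) set" where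
  "T_set p n lam a = {g \<in> cyc_group p n lam. \<forall>i\<in>{1..n}. add_ord (p ^ lam i) (g i) = p ^ a i}"

definition R_set :: "nat \<Rightarrow> nat \<Rightarrow> (nat \<Rightarrow> nat) \<Rightarrow> (nat \<Rightarrow> nat) \<Rightarrow> (nat \<Rightarrow> nat) set" where
  "R_set p n lam a = (\<Union>b\<in>{b. \<forall>i\<in>{1..n}. b i \<le> a i}. T_set p n lam b)"

text \<open>J(i,j); natural-number subtraction truncates at 0, giving max 0 (j - (lam i - lam k)).\<close>
definition J_set :: "nat \<Rightarrow> nat \<Rightarrow> (nat \<Rightarrow> nat) \<Rightarrow> nat \<Rightarrow> nat \<Rightarrow> (nat \<Rightarrow> nat) set" where
  "J_set p n lam i j = R_set p n lam (\<lambda>k. if k \<ge> i then j else j - (lam i - lam k))"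

definition J_poset :: "nat \<Rightarrow> nat \<Rightarrow> (nat \<Rightarrow> nat) \<Rightarrow> (nat \<Rightarrow> nat) set set" where
  "J_poset p n lam = {J_set p n lam i j | i j. i \<in> {1..n} \<and> j \<in> {1..lam i}}"

definition down_set :: "'a set set \<Rightarrow> 'a set set \<Rightarrow> bool" where
  "down_set P X \<longleftrightarrow> X \<subseteq> P \<and> (\<forall>x\<in>P. \<forall>y\<in>X. x \<subseteq> y \<longrightarrow> x \<in> X)"

definition down_set_chain :: "'a set set \<Rightarrow> 'a set set \<Rightarrow> bool" where
  "down_set_chain P X \<longleftrightarrow> down_set P X \<and> chain\<^sub>\<subseteq> X"

definition maximal_down_set_chain :: "'a set set \<Rightarrow> 'a set set \<Rightarrow> bool" where
  "maximal_down_set_chain P X \<longleftrightarrow> down_set_chain P X \<and> \<not> (\<exists>Y. down_set_chain P Y \<and> X \<subset> Y)"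

end

theory Submission
  imports Defs
begin

lemma abstract_mdc:
  assumes aP: "a \<in> P" and bP: "b \<in> P" and nab: "\<not> a \<subseteq> b" and nba: "\<not> b \<subseteq> a"
    and ca: "chain\<^sub>\<subseteq> {y\<in>P. y \<subseteq> a}" and cb: "chain\<^sub>\<subseteq> {y\<in>P. y \<subseteq> b}"
    and key: "\<And>x. x \<in> P \<Longrightarrow> chain\<^sub>\<subseteq> {y\<in>P. y \<subseteq> x} \<Longrightarrow> x \<subseteq> a \<or> x \<subseteq> b"
  shows "{X. maximal_down_set_chain P X} = {{y\<in>P. y \<subseteq> a}, {y\<in>P. y \<subseteq> b}}"
proof -
  define A where "A = {y\<in>P. y \<subseteq> a}"
  define B where "B = {y\<in>P. y \<subseteq> b}"
  have dA: "down_set_chain P A" using ca unfolding A_def down_set_chain_def down_set_def by blast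
  have dB: "down_set_chain P B" using cb unfolding B_def down_set_chain_def down_set_def by blast
  have sub: "X \<subseteq> A \<or> X \<subseteq> B" if X: "down_set_chain P X" for X
  proof -
    have inAB: "x \<in> A \<or> x \<in> B" if "x \<in> X" for x
    proof -
      have xP: "x \<in> P" using X that unfolding down_set_chain_def down_set_def by blast
      have "{y\<in>P. y \<subseteq> x} \<subseteq> X" using X that unfolding down_set_chain_def down_set_def by blast
      hence "chain\<^sub>\<subseteq> {y\<in>P. y \<subseteq> x}" using X unfolding down_set_chain_def chain_subset_def by blast
      thus ?thesis using key[OF xP] xP unfolding A_def B_def by blast
    qed
    show ?thesis
    proof (rule ccontr)
      assume "\<not> ?thesis"
      then obtain x y where x: "x \<in> X" "x \<notin> A" and y: "y \<in> X" "y \<notin> B" by blast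
      have "x \<in> B" "y \<in> A" using inAB x y by blast+
      have "x \<subseteq> y \<or> y \<subseteq> x" using X x y unfolding down_set_chain_def chain_subset_def by blast
      thus False using \<open>x \<in> B\<close> \<open>y \<in> A\<close> x y unfolding A_def B_def by blast
    qed
  qed
  have aA: "a \<in> A" "a \<notin> B" "b \<in> B" "b \<notin> A" using aP bP nab nba unfolding A_def B_def by auto
  have mA: "maximal_down_set_chain P A"
    unfolding maximal_down_set_chain_def using dA sub aA by blast
  have mB: "maximal_down_set_chain P B"
    unfolding maximal_down_set_chain_def using dB sub aA by blast
  have "X = A \<or> X = B" if m: "maximal_down_set_chain P X" for X
  proof -
    have dX: "down_set_chain P X" and nY: "\<And>Y. down_set_chain P Y \<Longrightarrow> \<not> X \<subset> Y"
      using m unfolding maximal_down_set_chain_def by blast+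
    from sub[OF dX] show ?thesis
    proof
      assume "X \<subseteq> A" thus ?thesis using nY[OF dA] by blast
    next
      assume "X \<subseteq> B" thus ?thesis using nY[OF dB] by blast
    qed
  qed
  thus ?thesis using mA mB unfolding A_def[symmetric] B_def[symmetric] by blast
qed

lemma R_cong: "(\<And>k. k \<in> {1..n} \<Longrightarrow> a k = a' k) \<Longrightarrow> R_set p n lam a = R_set p n lam a'"
proof -
  assume h: "\<And>k. k \<in> {1..n} \<Longrightarrow> a k = a' k"
  have "{b. \<forall>i\<in>{1..n}. b i \<le> a i} = {b. \<forall>i\<in>{1..n}. b i \<le> a' i}" using h by auto
  thus ?thesis unfolding R_set_def by simp
qed

lemma pow_dvd_lt: "prime (p::nat) \<Longrightarrow> a \<le> l \<Longrightarrow> 0 < a \<Longrightarrow> p ^ (l - a) < p ^ l"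
  by (intro power_strict_increasing) (auto dest: prime_gt_1_nat)

lemma R_sub:
  assumes p: "prime p" and a: "\<And>k. k \<in> {1..n} \<Longrightarrow> a k \<le> lam k"
  shows "R_set p n lam a \<subseteq> R_set p n lam b \<longleftrightarrow> (\<forall>k\<in>{1..n}. a k \<le> b k)"
proof
  assume "\<forall>k\<in>{1..n}. a k \<le> b k"
  hence "{c. \<forall>i\<in>{1..n}. c i \<le> a i} \<subseteq> {c. \<forall>i\<in>{1..n}. c i \<le> b i}"
    using order_trans by blast
  thus "R_set p n lam a \<subseteq> R_set p n lam b" unfolding R_set_def by (rule UN_mono) simp
next
  assume sub: "R_set p n lam a \<subseteq> R_set p n lam b"
  have p1: "1 < p" using p prime_gt_1_nat by blast
  define g where "g = (\<lambda>k. if k \<in> {1..n} \<and> 0 < a k then p ^ (lam k - a k) else 0)"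
  have gG: "g \<in> cyc_group p n lam" unfolding cyc_group_def
  proof (intro CollectI conjI ballI allI impI)
    fix i assume i: "i \<in> {1..n}"
    show "g i < p ^ lam i"
    proof (cases "0 < a i")
      case True thus ?thesis using pow_dvd_lt[OF p a[OF i] True] i unfolding g_def by simp
    next
      case False thus ?thesis using p1 unfolding g_def by simp
    qed
  next
    fix i assume "i \<notin> {1..n}" thus "g i = 0" unfolding g_def by (simp only: if_False simp_thms)
  qed
  have ordg: "add_ord (p ^ lam k) (g k) = p ^ a k" if k: "k \<in> {1..n}" for k
  proof (cases "0 < a k")
    case True
    have "p ^ (lam k - a k) dvd p ^ lam k" by (simp add: le_imp_power_dvd)
    hence "gcd (p ^ (lam k - a k)) (p ^ lam k) = p ^ (lam k - a k)" by (rule gcd_nat.absorb1)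
    moreover have "p ^ lam k div p ^ (lam k - a k) = p ^ a k"
    proof -
      have "p ^ lam k = p ^ (lam k - a k) * p ^ a k"
        using a[OF k] by (simp add: power_add[symmetric])
      thus ?thesis using p1 by simp
    qed
    ultimately show ?thesis using True k unfolding add_ord_def g_def by simp
  next
    case False
    thus ?thesis using k p1 unfolding add_ord_def g_def by simp
  qed
  have "g \<in> T_set p n lam a" unfolding T_set_def using gG ordg by blast
  hence "g \<in> R_set p n lam a" unfolding R_set_def by blast
  hence "g \<in> R_set p n lam b" using sub by blast
  then obtain c where c: "\<forall>i\<in>{1..n}. c i \<le> b i" and gc: "g \<in> T_set p n lam c"
    unfolding R_set_def by blast
  show "\<forall>k\<in>{1..n}. a k \<le> b k"
  proof
    fix k assume k: "k \<in> {1..n}"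
    have "p ^ a k = p ^ c k" using gc ordg[OF k] k unfolding T_set_def by auto
    hence "a k = c k" using p1 by (simp add: power_inject_exp)
    thus "a k \<le> b k" using c k by simp
  qed
qed

context
  fixes p n :: nat and lam :: "nat \<Rightarrow> nat"
  assumes pr: "prime p" and sm: "strict_mono_on {1..n} lam"
begin

lemma lt: "k \<in> {1..n} \<Longrightarrow> k' \<in> {1..n} \<Longrightarrow> k < k' \<Longrightarrow> lam k < lam k'"
  using sm by (simp add: strict_mono_on_def)

lemma le: "k \<in> {1..n} \<Longrightarrow> k' \<in> {1..n} \<Longrightarrow> k \<le> k' \<Longrightarrow> lam k \<le> lam k'"
  using lt by (cases "k = k'") (auto simp: less_imp_le)

lemma lt_rev: "k \<in> {1..n} \<Longrightarrow> k' \<in> {1..n} \<Longrightarrow> lam k < lam k' \<Longrightarrow> k < k'"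
  using le by (meson leD leI)

lemma Jeq: "i \<in> {1..n} \<Longrightarrow> J_set p n lam i j = R_set p n lam (\<lambda>k. j - (lam i - lam k))"
  unfolding J_set_def
proof (rule R_cong)
  fix k assume i: "i \<in> {1..n}" and k: "k \<in> {1..n}"
  show "(if i \<le> k then j else j - (lam i - lam k)) = j - (lam i - lam k)"
    using le[OF i k] by auto
qed

lemma Jsub: "i \<in> {1..n} \<Longrightarrow> i' \<in> {1..n} \<Longrightarrow> j \<le> lam i \<Longrightarrow>
  (J_set p n lam i j \<subseteq> J_set p n lam i' j' \<longleftrightarrow> (\<forall>k\<in>{1..n}. j - (lam i - lam k) \<le> j' - (lam i' - lam k)))"
  unfolding Jeq by (rule R_sub[OF pr]) auto

end


lemma arith1: "(j::nat) < j' \<Longrightarrow> lk \<le> L + 1 \<Longrightarrow> j - (L - lk) \<le> j' - (L + 1 - lk)"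
  by arith

lemma arith2: "(j::nat) \<le> j' \<Longrightarrow> lk \<le> L + 1 \<Longrightarrow> j - (L + 1 - lk) \<le> j' - (L - lk)"
  by arith

theorem mainTheorem20:
  fixes p n :: nat and lam :: "nat \<Rightarrow> nat"
  assumes "prime p" and "p \<noteq> 2"
    and "0 < lam 1" and "strict_mono_on {1..n} lam"
    and "n \<ge> 3" and "lam n - lam (n - 1) = 1"
  shows "{J_set p n lam i 1 | i. i \<in> {1..n}} \<noteq>
           {J_set p n lam (n - 1) j | j. j \<in> {1..lam (n - 1) - lam (n - 2)}}
           \<union> {J_set p n lam n j | j. j \<in> {1..lam (n - 1) - lam (n - 2) + 1}}
       \<and> {X. maximal_down_set_chain (J_poset p n lam) X} =
           {{J_set p n lam i 1 | i. i \<in> {1..n}},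
            {J_set p n lam (n - 1) j | j. j \<in> {1..lam (n - 1) - lam (n - 2)}}
            \<union> {J_set p n lam n j | j. j \<in> {1..lam (n - 1) - lam (n - 2) + 1}}}"
proof -
  note Js = Jsub[OF assms(1) assms(4)]
  note lek = le[OF assms(1) assms(4)]
  note ltk = lt[OF assms(1) assms(4)]
  note ltr = lt_rev[OF assms(1) assms(4)]
  define P where "P = J_poset p n lam"
  define a where "a = J_set p n lam 1 1"
  define m where "m = lam (n-1) - lam (n-2)"
  define b where "b = J_set p n lam n (m+1)"
  have n3: "n \<ge> 3" using assms(5) .
  have idx: "n-2 \<in> {1..n}" "n-1 \<in> {1..n}" "n \<in> {1..n}" "1 \<in> {1..n}" using n3 by auto
  have l12: "lam (n-2) < lam (n-1)" using ltk[OF idx(1) idx(2)] n3 by simp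
  have l2n: "lam (n-1) < lam n" using ltk[OF idx(2) idx(3)] n3 by simp
  have l23: "lam n = lam (n-1) + 1" using l2n assms(6) by simp
  have lk1: "lam 1 \<le> lam k" if "k \<in> {1..n}" for k using lek[OF idx(4) that] that by simp
  have lkn: "lam k \<le> lam n" if "k \<in> {1..n}" for k using lek[OF that idx(3)] that by simp
  have pos: "1 \<le> lam k" if "k \<in> {1..n}" for k using lk1[OF that] assms(3) by simp
  have m1: "m \<ge> 1" and mn: "m + 1 = lam n - lam (n-2)" using l12 l23 unfolding m_def by simp_all
  have Pmem: "y \<in> P \<longleftrightarrow> (\<exists>i j. y = J_set p n lam i j \<and> i\<in>{1..n} \<and> j\<in>{1..lam i})" for y
    unfolding P_def J_poset_def by blast
  have Pin: "J_set p n lam i j \<in> P" if "i \<in> {1..n}" "1 \<le> j" "j \<le> lam i" for i j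
    unfolding Pmem using that by auto
  have inb: "J_set p n lam i j \<subseteq> b \<longleftrightarrow> j \<le> lam i - lam (n-2)"
    if i: "i \<in> {1..n}" and j: "j \<le> lam i" for i j
  proof
    assume "J_set p n lam i j \<subseteq> b"
    hence "\<forall>k\<in>{1..n}. j - (lam i - lam k) \<le> (m+1) - (lam n - lam k)"
      unfolding b_def using Js[OF i idx(3) j] by simp
    hence "j - (lam i - lam (n-2)) \<le> (m+1) - (lam n - lam (n-2))" using idx by blast
    thus "j \<le> lam i - lam (n-2)" using mn by simp
  next
    assume h: "j \<le> lam i - lam (n-2)"
    have "j - (lam i - lam k) \<le> (m+1) - (lam n - lam k)" if k: "k \<in> {1..n}" for k
      using h mn lkn[OF k] lkn[OF i] l12 l23 by arith
    thus "J_set p n lam i j \<subseteq> b" unfolding b_def using Js[OF i idx(3) j] by simp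
  qed
  have aP: "a \<in> P" unfolding a_def using Pin[OF idx(4) _ pos[OF idx(4)]] by simp
  have bP: "b \<in> P" unfolding b_def using Pin[OF idx(3)] mn by simp
  have nab: "\<not> a \<subseteq> b" unfolding a_def using inb[OF idx(4)] pos[OF idx(4)] lk1[OF idx(1)] by simp
  have nba: "\<not> b \<subseteq> a"
  proof
    assume "b \<subseteq> a"
    hence "\<forall>k\<in>{1..n}. (m+1) - (lam n - lam k) \<le> 1 - (lam 1 - lam k)"
      unfolding a_def b_def using Js[OF idx(3) idx(4)] mn l12 l23 by simp
    hence "(m+1) - (lam n - lam n) \<le> 1 - (lam 1 - lam n)" using idx by blast
    thus False using m1 by simp
  qed
  have D1: "{J_set p n lam i 1 | i. i \<in> {1..n}} = {y\<in>P. y \<subseteq> a}"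
  proof
    show "{J_set p n lam i 1 | i. i \<in> {1..n}} \<subseteq> {y\<in>P. y \<subseteq> a}"
    proof
      fix y assume "y \<in> {J_set p n lam i 1 | i. i \<in> {1..n}}"
      then obtain i where y: "y = J_set p n lam i 1" and i: "i \<in> {1..n}" by blast
      have "y \<in> P" unfolding y using Pin[OF i _ pos[OF i]] by simp
      moreover have "y \<subseteq> a" unfolding y a_def using Js[OF i idx(4) pos[OF i]] lk1 by simp
      ultimately show "y \<in> {y\<in>P. y \<subseteq> a}" by blast
    qed
  next
    show "{y\<in>P. y \<subseteq> a} \<subseteq> {J_set p n lam i 1 | i. i \<in> {1..n}}"
    proof
      fix y assume "y \<in> {y\<in>P. y \<subseteq> a}"
      then obtain i j where y: "y = J_set p n lam i j" and i: "i\<in>{1..n}" and j: "j\<in>{1..lam i}"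
        and ya: "y \<subseteq> a" unfolding Pmem by blast
      have "\<forall>k\<in>{1..n}. j - (lam i - lam k) \<le> 1 - (lam 1 - lam k)"
        using ya unfolding y a_def using Js[OF i idx(4)] j by simp
      hence "j - (lam i - lam n) \<le> 1 - (lam 1 - lam n)" using idx by blast
      hence "j = 1" using j lkn[OF i] lk1[OF idx(3)] by simp
      thus "y \<in> {J_set p n lam i 1 | i. i \<in> {1..n}}" using y i by blast
    qed
  qed
  have D2: "{J_set p n lam (n - 1) j | j. j \<in> {1..m}} \<union> {J_set p n lam n j | j. j \<in> {1..m + 1}}
      = {y\<in>P. y \<subseteq> b}"
  proof
    show "{J_set p n lam (n - 1) j | j. j \<in> {1..m}} \<union> {J_set p n lam n j | j. j \<in> {1..m + 1}}
      \<subseteq> {y\<in>P. y \<subseteq> b}"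
    proof
      fix y assume "y \<in> {J_set p n lam (n - 1) j | j. j \<in> {1..m}} \<union> {J_set p n lam n j | j. j \<in> {1..m + 1}}"
      then obtain i j where y: "y = J_set p n lam i j" and i: "i = n-1 \<and> j \<in> {1..m} \<or> i = n \<and> j \<in> {1..m+1}"
        by blast
      have iI: "i \<in> {1..n}" using i idx by blast
      have jb: "j \<le> lam i - lam (n-2)" and j1: "1 \<le> j"
        using i mn l12 l23 unfolding m_def by auto
      hence jl: "j \<le> lam i" by simp
      have "y \<in> P" unfolding y using Pin[OF iI j1 jl] .
      moreover have "y \<subseteq> b" unfolding y using inb[OF iI jl] jb by simp
      ultimately show "y \<in> {y\<in>P. y \<subseteq> b}" by blast
    qed
  next
    show "{y\<in>P. y \<subseteq> b} \<subseteq> {J_set p n lam (n - 1) j | j. j \<in> {1..m}} \<union> {J_set p n lam n j | j. j \<in> {1..m + 1}}"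
    proof
      fix y assume "y \<in> {y\<in>P. y \<subseteq> b}"
      then obtain i j where y: "y = J_set p n lam i j" and i: "i\<in>{1..n}" and j: "j\<in>{1..lam i}"
        and yb: "y \<subseteq> b" unfolding Pmem by blast
      have jb: "j \<le> lam i - lam (n-2)" using inb[OF i] j yb y by simp
      hence "lam (n-2) < lam i" using j by auto
      hence "n - 2 < i" using ltr[OF idx(1) i] by simp
      hence "i = n - 1 \<or> i = n" using i by auto
      thus "y \<in> {J_set p n lam (n - 1) j | j. j \<in> {1..m}} \<union> {J_set p n lam n j | j. j \<in> {1..m + 1}}"
      proof
        assume h: "i = n-1"
        have "j \<in> {1..m}" using j jb h unfolding m_def by simp
        thus ?thesis using y h by blast
      next
        assume h: "i = n"
        have "j \<in> {1..m+1}" using j jb h mn by simp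
        thus ?thesis using y h by blast
      qed
    qed
  qed
  have ca: "chain\<^sub>\<subseteq> {y\<in>P. y \<subseteq> a}" unfolding D1[symmetric] chain_subset_def
  proof (intro ballI)
    fix x y assume "x \<in> {J_set p n lam i 1 | i. i \<in> {1..n}}" "y \<in> {J_set p n lam i 1 | i. i \<in> {1..n}}"
    then obtain i i' where x: "x = J_set p n lam i 1" and i: "i \<in> {1..n}"
      and y: "y = J_set p n lam i' 1" and i': "i' \<in> {1..n}" by blast
    have c: "J_set p n lam i 1 \<subseteq> J_set p n lam i' 1" if "i \<in> {1..n}" "i' \<in> {1..n}" "i' \<le> i" for i i'
      using Js[OF that(1,2) pos[OF that(1)]] lek[OF that(2,1,3)] by auto
    show "x \<subseteq> y \<or> y \<subseteq> x" unfolding x y using c[OF i i'] c[OF i' i] by linarith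
  qed
  have sc: "J_set p n lam i j \<subseteq> J_set p n lam i' j'"
    if i: "i = n-1 \<or> i = n" and i': "i' = n-1 \<or> i' = n" and j: "j \<le> lam i"
      and s: "2*j + (if i = n then 0 else 1) \<le> 2*j' + (if i' = n then 0 else 1)" for i j i' j'
  proof -
    have iI: "i \<in> {1..n}" "i' \<in> {1..n}" using i i' idx by auto
    have "j - (lam i - lam k) \<le> j' - (lam i' - lam k)" if k: "k \<in> {1..n}" for k
    proof -
      have "lam k \<le> lam (n-1) + 1" using lkn[OF k] l23 by simp
      moreover have "n - 1 \<noteq> n" using n3 by simp
      note lk = this
      have nn: "n - 1 \<noteq> n" using n3 by simp
      from i show ?thesis
      proof
        assume i1: "i = n-1"
        from i' show ?thesis
        proof
          assume i1': "i' = n-1"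
          have "j \<le> j'" using s i1 i1' nn by simp
          thus ?thesis using i1 i1' by (simp add: diff_le_mono)
        next
          assume i1': "i' = n"
          have "j < j'" using s i1 i1' nn by simp
          thus ?thesis using i1 i1' l23 lk by (simp add: arith1)
        qed
      next
        assume i1: "i = n"
        from i' show ?thesis
        proof
          assume i1': "i' = n-1"
          have "j \<le> j'" using s i1 i1' nn by simp
          thus ?thesis using i1 i1' l23 lk by (simp add: arith2)
        next
          assume i1': "i' = n"
          have "j \<le> j'" using s i1 i1' nn by simp
          thus ?thesis using i1 i1' by (simp add: diff_le_mono)
        qed
      qed
    qed
    thus ?thesis using Js[OF iI j] by simp
  qed
  have cb: "chain\<^sub>\<subseteq> {y\<in>P. y \<subseteq> b}" unfolding D2[symmetric] chain_subset_def
  proof (intro ballI)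
    fix x y assume "x \<in> {J_set p n lam (n - 1) j | j. j \<in> {1..m}} \<union> {J_set p n lam n j | j. j \<in> {1..m + 1}}"
      "y \<in> {J_set p n lam (n - 1) j | j. j \<in> {1..m}} \<union> {J_set p n lam n j | j. j \<in> {1..m + 1}}"
    then obtain i j i' j' where x: "x = J_set p n lam i j" and i: "i = n-1 \<and> j \<in> {1..m} \<or> i = n \<and> j \<in> {1..m+1}"
      and y: "y = J_set p n lam i' j'" and i': "i' = n-1 \<and> j' \<in> {1..m} \<or> i' = n \<and> j' \<in> {1..m+1}"
      by blast
    have "j \<le> lam i - lam (n-2)" "j' \<le> lam i' - lam (n-2)" using i i' mn l12 l23 unfolding m_def by auto
    hence jl: "j \<le> lam i" "j' \<le> lam i'" by simp_all
    have ii: "i = n-1 \<or> i = n" "i' = n-1 \<or> i' = n" using i i' by auto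
    show "x \<subseteq> y \<or> y \<subseteq> x" unfolding x y using sc[OF ii(1) ii(2) jl(1), of j'] sc[OF ii(2) ii(1) jl(2), of j]
      by linarith
  qed
  have key: "x \<subseteq> a \<or> x \<subseteq> b" if xP: "x \<in> P" and cx: "chain\<^sub>\<subseteq> {y\<in>P. y \<subseteq> x}" for x
  proof -
    obtain i j where x: "x = J_set p n lam i j" and i: "i\<in>{1..n}" and j: "j\<in>{1..lam i}"
      using xP unfolding Pmem by blast
    show ?thesis
    proof (cases "j = 1")
      case True
      thus ?thesis using D1 i x by blast
    next
      case False
      hence j2: "j \<ge> 2" using j by simp
      show ?thesis
      proof (cases "j \<le> lam i - lam (n-2)")
        case True thus ?thesis using inb[OF i] j x by simp
      next
        case False
        define c where "c = J_set p n lam (n-2) 1"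
        define d where "d = J_set p n lam n 2"
        have cP: "c \<in> P" unfolding c_def using Pin[OF idx(1) _ pos[OF idx(1)]] by simp
        have dP: "d \<in> P" unfolding d_def using Pin[OF idx(3)] l12 l23 by simp
        have "1 - (lam (n-2) - lam k) \<le> j - (lam i - lam k)" if k: "k \<in> {1..n}" for k
          using False by arith
        hence cx': "c \<subseteq> x" unfolding c_def x using Js[OF idx(1) i pos[OF idx(1)]] by simp
        have "2 - (lam n - lam k) \<le> j - (lam i - lam k)" if k: "k \<in> {1..n}" for k
          using j2 lkn[OF k] lkn[OF i] by arith
        hence dx: "d \<subseteq> x" unfolding d_def x using Js[OF idx(3) i] l23 l12 by simp
        have "\<not> c \<subseteq> d"
        proof
          assume "c \<subseteq> d"
          hence "\<forall>k\<in>{1..n}. 1 - (lam (n-2) - lam k) \<le> 2 - (lam n - lam k)"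
            unfolding c_def d_def using Js[OF idx(1) idx(3) pos[OF idx(1)]] by simp
          hence "1 - (lam (n-2) - lam (n-2)) \<le> 2 - (lam n - lam (n-2))" using idx by blast
          thus False using mn m1 by simp
        qed
        moreover have "\<not> d \<subseteq> c"
        proof
          assume "d \<subseteq> c"
          hence "\<forall>k\<in>{1..n}. 2 - (lam n - lam k) \<le> 1 - (lam (n-2) - lam k)"
            unfolding c_def d_def using Js[OF idx(3) idx(1)] l12 l23 by simp
          hence "2 - (lam n - lam n) \<le> 1 - (lam (n-2) - lam n)" using idx by blast
          thus False by simp
        qed
        moreover have "c \<subseteq> d \<or> d \<subseteq> c" using cx cP dP cx' dx unfolding chain_subset_def by blast
        ultimately show ?thesis by blast
      qed
    qed
  qed
  have main: "{X. maximal_down_set_chain P X} = {{y\<in>P. y \<subseteq> a}, {y\<in>P. y \<subseteq> b}}"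
    by (rule abstract_mdc[OF aP bP nab nba ca cb key])
  have ne: "{y\<in>P. y \<subseteq> a} \<noteq> {y\<in>P. y \<subseteq> b}" using aP nab by blast
  show ?thesis using main ne D1 D2 unfolding P_def m_def by simp
qed

end
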